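(* Let $V:\Omega\to[1,\infty)$ be measurable, $\varphi$ an admissible rate function, and $S$ a stochastic operator on $\mathcal M_V$. Assume: (1) $S$ satisfies the weak Lyapunov condition for $V,\varphi$: there exist $K>0$ and $0<\varsigma<1$ with $$\|S\mu\|_V+\varsigma\|\mu\|_{\varphi(V)}\le\|\mu\|_V+K\|\mu\|\qquad\text{for all }\mu\in\mathcal M_V;$$ (2) for some integer $N\ge1$, $S^N$ satisfies the local coupling condition for the weight $\varphi(V)$: there exist $0<\gamma_H<1$ and $A>K/\varsigma$ such that for every $\nu\in\mathcal N_{\varphi(V)}$ with $\|\nu\|_{\varphi(V)}\le A\|\nu\|$ one has $\|S^N\nu\|\le\gamma_H\|\nu\|$. Set $\beta:=(1-\gamma_H)/(KN)$, $\alpha:=\beta(\varsigma-K/A)>0$ and $|||\mu|||_V:=\|\mu\|+\beta\|\mu\|_V$ for $\mu\in\mathcal M_V$. Then for every $\nu\in\mathcal N_V$ there exists an integer $n$ with $N\le n\le 2N-1$ such that $$|||S^n\nu|||_V+\alpha\sum_{k=0}^{n-1}\|S^k\nu\|_{\varphi(V)}\le|||\nu|||_V .$$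
   Context: Let $(\Omega,\mathcal E)$ be a measurable space. $\mathcal M$ denotes the space of finite signed measures on $\Omega$, $\mathcal P\subset\mathcal M$ the set of probability measures, and $\mathcal N=\{\nu\in\mathcal M:\nu(\Omega)=0\}$. For $\mu\in\mathcal M$ with Hahn–Jordan decomposition $\mu=\mu_+-\mu_-$, $|\mu|=\mu_++\mu_-$ and $\|\mu\|=\int_\Omega d|\mu|$ is the total variation norm. For a measurable $W:\Omega\to[1,\infty)$, $\|\mu\|_W=\int_\Omega W\,d|\mu|$, $\mathcal M_W=\{\mu\in\mathcal M:\|\mu\|_W<\infty\}$, $\mathcal P_W=\mathcal P\cap\mathcal M_W$, $\mathcal N_W=\mathcal N\cap\mathcal M_W$. A stochastic operator is a linear map $S:\mathcal M\to\mathcal M$ with $S(\mathcal P)\subseteq\mathcal P$; it is a stochastic operator on $\mathcal M_W$ if moreover $S(\mathcal M_W)\subseteq\mathcal M_W$ and the restriction is bounded for $\|\cdot\|_W$. An admissible rate function is a concave function $\varphi:[1,\infty)\to[1,\infty)$ with $\varphi(1)=1$ and $\varphi(v)/v\to0$ as $v\to\infty$; $\varphi(V)$ denotes the composition $\varphi\circ V$. *)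

theory Defs
  imports "HOL-Analysis.Analysis"
begin

text \<open>Finite signed measures on the measurable space M, represented as real-valued
  set functions which vanish outside the sigma algebra and are countably additive.\<close>

definition fsm :: "'a measure \<Rightarrow> ('a set \<Rightarrow> real) set" where
  "fsm M = {\<mu>. (\<forall>A. A \<notin> sets M \<longrightarrow> \<mu> A = 0) \<and>
     (\<forall>F::nat \<Rightarrow> 'a set. range F \<subseteq> sets M \<longrightarrow> disjoint_family F \<longrightarrow>
        (\<lambda>i. \<mu> (F i)) sums \<mu> (\<Union>i. F i))}"

definition prob_fsm :: "'a measure \<Rightarrow> ('a set \<Rightarrow> real) set" where
  "prob_fsm M = {\<mu> \<in> fsm M. (\<forall>A\<in>sets M. 0 \<le> \<mu> A) \<and> \<mu> (space M) = 1}"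

definition tv_measure :: "'a measure \<Rightarrow> ('a set \<Rightarrow> real) \<Rightarrow> 'a measure" where
  "tv_measure M \<mu> = measure_of (space M) (sets M)
     (\<lambda>A. SUP P \<in> {P. finite P \<and> P \<subseteq> sets M \<and> disjoint P \<and> \<Union>P = A}.
              ennreal (\<Sum>B\<in>P. \<bar>\<mu> B\<bar>))"

definition wnorm_ext :: "'a measure \<Rightarrow> ('a \<Rightarrow> real) \<Rightarrow> ('a set \<Rightarrow> real) \<Rightarrow> ennreal" where
  "wnorm_ext M W \<mu> = (\<integral>\<^sup>+ x. ennreal (W x) \<partial>(tv_measure M \<mu>))"

definition wnorm :: "'a measure \<Rightarrow> ('a \<Rightarrow> real) \<Rightarrow> ('a set \<Rightarrow> real) \<Rightarrow> real" where
  "wnorm M W \<mu> = enn2real (wnorm_ext M W \<mu>)"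

definition tvnorm :: "'a measure \<Rightarrow> ('a set \<Rightarrow> real) \<Rightarrow> real" where
  "tvnorm M \<mu> = wnorm M (\<lambda>_. 1) \<mu>"

definition M_W :: "'a measure \<Rightarrow> ('a \<Rightarrow> real) \<Rightarrow> ('a set \<Rightarrow> real) set" where
  "M_W M W = {\<mu> \<in> fsm M. wnorm_ext M W \<mu> < \<infinity>}"

definition N_W :: "'a measure \<Rightarrow> ('a \<Rightarrow> real) \<Rightarrow> ('a set \<Rightarrow> real) set" where
  "N_W M W = {\<mu> \<in> M_W M W. \<mu> (space M) = 0}"

definition stochastic_op :: "'a measure \<Rightarrow> (('a set \<Rightarrow> real) \<Rightarrow> ('a set \<Rightarrow> real)) \<Rightarrow> bool" where
  "stochastic_op M S \<longleftrightarrow>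
     (\<forall>\<mu>\<in>fsm M. S \<mu> \<in> fsm M) \<and>
     (\<forall>\<mu>\<in>fsm M. \<forall>\<nu>\<in>fsm M. \<forall>a b::real.
         S (\<lambda>A. a * \<mu> A + b * \<nu> A) = (\<lambda>A. a * S \<mu> A + b * S \<nu> A)) \<and>
     (\<forall>\<mu>\<in>prob_fsm M. S \<mu> \<in> prob_fsm M)"

definition stochastic_op_W :: "'a measure \<Rightarrow> ('a \<Rightarrow> real) \<Rightarrow> (('a set \<Rightarrow> real) \<Rightarrow> ('a set \<Rightarrow> real)) \<Rightarrow> bool" where
  "stochastic_op_W M W S \<longleftrightarrow> stochastic_op M S \<and>
     (\<forall>\<mu>\<in>M_W M W. S \<mu> \<in> M_W M W) \<and>
     (\<exists>C. \<forall>\<mu>\<in>M_W M W. wnorm M W (S \<mu>) \<le> C * wnorm M W \<mu>)"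

definition admissible_rate :: "(real \<Rightarrow> real) \<Rightarrow> bool" where
  "admissible_rate \<phi> \<longleftrightarrow> concave_on {1..} \<phi> \<and> (\<forall>v\<ge>1. \<phi> v \<ge> 1) \<and> \<phi> 1 = 1 \<and>
     ((\<lambda>v. \<phi> v / v) \<longlongrightarrow> 0) at_top"

end

theory Submission imports Defs begin

definition parts :: "'a measure \<Rightarrow> 'a set \<Rightarrow> 'a set set set" where
  "parts M A = {P. finite P \<and> P \<subseteq> sets M \<and> disjoint P \<and> \<Union>P = A}"

definition tv :: "'a measure \<Rightarrow> ('a set \<Rightarrow> real) \<Rightarrow> 'a set \<Rightarrow> ennreal" where
  "tv M \<mu> A = (SUP P \<in> parts M A. ennreal (\<Sum>B\<in>P. \<bar>\<mu> B\<bar>))"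

lemma tv_measure_eq: "tv_measure M \<mu> = measure_of (space M) (sets M) (tv M \<mu>)"
  unfolding tv_measure_def tv_def parts_def by simp

lemma fsm_sums: "\<mu> \<in> fsm M \<Longrightarrow> range F \<subseteq> sets M \<Longrightarrow> disjoint_family F \<Longrightarrow>
    (\<lambda>i. \<mu> (F i)) sums \<mu> (\<Union>i. F i)"
  unfolding fsm_def by blast

lemma fsm_out: "\<mu> \<in> fsm M \<Longrightarrow> A \<notin> sets M \<Longrightarrow> \<mu> A = 0"
  unfolding fsm_def by blast

lemma fsm_empty:
  assumes "\<mu> \<in> fsm M" shows "\<mu> {} = 0"
proof -
  have "(\<lambda>i. \<mu> {}) sums \<mu> (\<Union>i::nat. {})"
    by (rule fsm_sums[OF assms]) (auto simp: disjoint_family_on_def)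
  hence "summable (\<lambda>i::nat. \<mu> {})" by (rule sums_summable)
  thus ?thesis by (simp add: summable_const_iff)
qed

lemma tv_upper: "P \<in> parts M A \<Longrightarrow> ennreal (\<Sum>B\<in>P. \<bar>\<mu> B\<bar>) \<le> tv M \<mu> A"
  unfolding tv_def by (rule SUP_upper)

lemma parts_single: "A \<in> sets M \<Longrightarrow> {A} \<in> parts M A"
  by (simp add: parts_def)

lemma tv_abs: "A \<in> sets M \<Longrightarrow> ennreal \<bar>\<mu> A\<bar> \<le> tv M \<mu> A"
  using tv_upper[OF parts_single, of A M \<mu>] by simp

lemma tv_family:
  assumes e: "\<mu> {} = 0" and I: "finite I" "h ` I \<subseteq> sets M" "disjoint_family_on h I"
  shows "ennreal (\<Sum>i\<in>I. \<bar>\<mu> (h i)\<bar>) \<le> tv M \<mu> (\<Union>i\<in>I. h i)"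
proof -
  have "disjoint (h ` I)"
    unfolding disjoint_def pairwise_def disjnt_def
  proof (intro ballI impI)
    fix x y assume "x \<in> h ` I" "y \<in> h ` I" "x \<noteq> y"
    then obtain i j where "i \<in> I" "j \<in> I" "x = h i" "y = h j" "i \<noteq> j" by auto
    thus "x \<inter> y = {}" using I(3) unfolding disjoint_family_on_def by auto
  qed
  hence P: "h ` I \<in> parts M (\<Union>i\<in>I. h i)"
    using I unfolding parts_def by auto
  have "(\<Sum>B\<in>h`I. \<bar>\<mu> B\<bar>) = (\<Sum>i\<in>I. \<bar>\<mu> (h i)\<bar>)"
  proof (subst sum.reindex_nontrivial)
    show "finite I" by fact
    fix x y assume "x \<in> I" "y \<in> I" "x \<noteq> y" "h x = h y"
    hence "h x = {}" using I(3) unfolding disjoint_family_on_def by auto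
    thus "\<bar>\<mu> (h x)\<bar> = 0" using e by simp
  qed simp
  with tv_upper[OF P, of \<mu>] show ?thesis by simp
qed

lemma tv_empty: assumes "\<mu> {} = 0" shows "tv M \<mu> {} = 0"
proof -
  have "tv M \<mu> {} \<le> 0" unfolding tv_def
  proof (rule SUP_least)
    fix P assume "P \<in> parts M {}"
    hence "\<forall>B\<in>P. B = {}" by (auto simp: parts_def)
    hence "(\<Sum>B\<in>P. \<bar>\<mu> B\<bar>) = 0" using assms by (intro sum.neutral) auto
    thus "ennreal (\<Sum>B\<in>P. \<bar>\<mu> B\<bar>) \<le> 0" by simp
  qed
  thus ?thesis by simp
qed

lemma tv_superadd:
  assumes e: "\<mu> {} = 0" and XY: "X \<in> sets M" "Y \<in> sets M" "X \<inter> Y = {}"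
  shows "tv M \<mu> X + tv M \<mu> Y \<le> tv M \<mu> (X \<union> Y)"
proof -
  have ne: "parts M X \<noteq> {}" "parts M Y \<noteq> {}" using parts_single XY by blast+
  have key: "ennreal (\<Sum>B\<in>P. \<bar>\<mu> B\<bar>) + ennreal (\<Sum>B\<in>Q. \<bar>\<mu> B\<bar>) \<le> tv M \<mu> (X \<union> Y)"
    if P: "P \<in> parts M X" and Q: "Q \<in> parts M Y" for P Q
  proof -
    have PQ: "P \<union> Q \<in> parts M (X \<union> Y)"
    proof -
      have "disjoint (P \<union> Q)"
        unfolding disjoint_def pairwise_def disjnt_def
      proof (intro ballI impI)
        fix B C assume BC: "B \<in> P \<union> Q" "C \<in> P \<union> Q" "B \<noteq> C"
        show "B \<inter> C = {}"
        proof (cases "B \<in> P")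
          case True
          show ?thesis
          proof (cases "C \<in> P")
            case True with \<open>B \<in> P\<close> BC P show ?thesis
              by (auto simp: parts_def disjoint_def pairwise_def disjnt_def)
          next
            case False hence "C \<in> Q" using BC by auto
            hence "C \<subseteq> Y" using Q by (auto simp: parts_def)
            moreover have "B \<subseteq> X" using \<open>B\<in>P\<close> P by (auto simp: parts_def)
            ultimately show ?thesis using XY by auto
          qed
        next
          case False hence "B \<in> Q" using BC by auto
          show ?thesis
          proof (cases "C \<in> Q")
            case True with \<open>B \<in> Q\<close> BC Q show ?thesis
              by (auto simp: parts_def disjoint_def pairwise_def disjnt_def)
          next
            case False hence "C \<in> P" using BC by auto
            hence "C \<subseteq> X" using P by (auto simp: parts_def)
            moreover have "B \<subseteq> Y" using \<open>B\<in>Q\<close> Q by (auto simp: parts_def)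
            ultimately show ?thesis using XY by auto
          qed
        qed
      qed
      thus ?thesis using P Q by (auto simp: parts_def)
    qed
    have "(\<Sum>B\<in>P \<union> Q. \<bar>\<mu> B\<bar>) = (\<Sum>B\<in>P. \<bar>\<mu> B\<bar>) + (\<Sum>B\<in>Q. \<bar>\<mu> B\<bar>)"
    proof (rule sum.union_inter_neutral)
      show "finite P" "finite Q" using P Q by (auto simp: parts_def)
      show "\<forall>x\<in>P \<inter> Q. \<bar>\<mu> x\<bar> = 0"
      proof
        fix B assume "B \<in> P \<inter> Q"
        hence "B \<subseteq> X" "B \<subseteq> Y" using P Q by (auto simp: parts_def)
        hence "B = {}" using XY by auto
        thus "\<bar>\<mu> B\<bar> = 0" using e by simp
      qed
    qed
    hence "ennreal (\<Sum>B\<in>P \<union> Q. \<bar>\<mu> B\<bar>) = ennreal (\<Sum>B\<in>P. \<bar>\<mu> B\<bar>) + ennreal (\<Sum>B\<in>Q. \<bar>\<mu> B\<bar>)"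
      by (simp add: ennreal_plus sum_nonneg)
    with tv_upper[OF PQ, of \<mu>] show ?thesis by simp
  qed
  have "tv M \<mu> X + tv M \<mu> Y = (SUP P\<in>parts M X. ennreal (\<Sum>B\<in>P. \<bar>\<mu> B\<bar>) + tv M \<mu> Y)"
    unfolding tv_def[of M \<mu> X] by (rule ennreal_SUP_add_left[symmetric, OF ne(1)])
  also have "\<dots> = (SUP P\<in>parts M X. SUP Q\<in>parts M Y. ennreal (\<Sum>B\<in>P. \<bar>\<mu> B\<bar>) + ennreal (\<Sum>B\<in>Q. \<bar>\<mu> B\<bar>))"
    unfolding tv_def[of M \<mu> Y] by (simp add: ennreal_SUP_add_right[OF ne(2)])
  also have "\<dots> \<le> tv M \<mu> (X \<union> Y)"
    by (intro SUP_least key)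
  finally show ?thesis .
qed

lemma tv_mono:
  assumes e: "\<mu> {} = 0" and XY: "X \<in> sets M" "Y \<in> sets M" "X \<subseteq> Y"
  shows "tv M \<mu> X \<le> tv M \<mu> Y"
proof -
  have "tv M \<mu> X \<le> tv M \<mu> X + tv M \<mu> (Y - X)" by simp
  also have "\<dots> \<le> tv M \<mu> (X \<union> (Y - X))" using XY by (intro tv_superadd e) auto
  also have "X \<union> (Y - X) = Y" using XY by auto
  finally show ?thesis .
qed

lemma tv_finite_union:
  fixes F :: "nat \<Rightarrow> 'a set"
  assumes e: "\<mu> {} = 0" and F: "range F \<subseteq> sets M" "disjoint_family F"
  shows "(\<Sum>i<n. tv M \<mu> (F i)) \<le> tv M \<mu> (\<Union>i<n. F i)"
proof (induction n)
  case 0 then show ?case by simp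
next
  case (Suc n)
  have "(\<Sum>i<Suc n. tv M \<mu> (F i)) = (\<Sum>i<n. tv M \<mu> (F i)) + tv M \<mu> (F n)" by simp
  also have "\<dots> \<le> tv M \<mu> (\<Union>i<n. F i) + tv M \<mu> (F n)" using Suc by (rule add_right_mono)
  also have "\<dots> \<le> tv M \<mu> ((\<Union>i<n. F i) \<union> F n)"
  proof (intro tv_superadd e)
    show "(\<Union>i<n. F i) \<in> sets M" "F n \<in> sets M" using F by auto
    show "(\<Union>i<n. F i) \<inter> F n = {}"
    proof (rule equals0I)
      fix x assume "x \<in> (\<Union>i<n. F i) \<inter> F n"
      then obtain i where "i < n" "x \<in> F i" "x \<in> F n" by auto
      moreover have "F i \<inter> F n = {}" using F(2) \<open>i < n\<close> unfolding disjoint_family_on_def by simp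
      ultimately show False by auto
    qed
  qed
  also have "(\<Union>i<n. F i) \<union> F n = (\<Union>i<Suc n. F i)" by (auto simp: lessThan_Suc)
  finally show ?case .
qed

lemma tv_countably_additive:
  assumes mu: "\<mu> \<in> fsm M"
  shows "countably_additive (sets M) (tv M \<mu>)"
  unfolding countably_additive_def
proof (intro allI impI)
  fix F :: "nat \<Rightarrow> 'a set"
  assume F: "range F \<subseteq> sets M" "disjoint_family F" "\<Union>(range F) \<in> sets M"
  have e: "\<mu> {} = 0" using fsm_empty mu .
  show "(\<Sum>i. tv M \<mu> (F i)) = tv M \<mu> (\<Union>(range F))"
  proof (rule antisym)
    have lim: "(\<lambda>n. \<Sum>i<n. tv M \<mu> (F i)) \<longlonglongrightarrow> (\<Sum>i. tv M \<mu> (F i))"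
      by (rule summable_LIMSEQ) (rule summableI)
    show "(\<Sum>i. tv M \<mu> (F i)) \<le> tv M \<mu> (\<Union>(range F))"
    proof (rule LIMSEQ_le_const2[OF lim], intro exI allI impI)
      fix n
      have "(\<Sum>i<n. tv M \<mu> (F i)) \<le> tv M \<mu> (\<Union>i<n. F i)" by (rule tv_finite_union[where \<mu>=\<mu> and F=F and M=M, OF e F(1) F(2)])
      also have "\<dots> \<le> tv M \<mu> (\<Union>(range F))"
        using F by (intro tv_mono e) auto
      finally show "(\<Sum>i<n. tv M \<mu> (F i)) \<le> tv M \<mu> (\<Union>(range F))" .
    qed
    show "tv M \<mu> (\<Union>(range F)) \<le> (\<Sum>i. tv M \<mu> (F i))"
      unfolding tv_def[of M \<mu> "\<Union>(range F)"]
    proof (rule SUP_least)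
      fix P assume P: "P \<in> parts M (\<Union>(range F))"
      have Pfin: "finite P" and Psets: "P \<subseteq> sets M" and Pdisj: "disjoint P"
        and PU: "\<Union>P = \<Union>(range F)" using P by (auto simp: parts_def)
      have pt: "ennreal \<bar>\<mu> B\<bar> \<le> (\<Sum>i. ennreal \<bar>\<mu> (B \<inter> F i)\<bar>)" if B: "B \<in> P" for B
      proof -
        have s: "(\<lambda>i. \<mu> (B \<inter> F i)) sums \<mu> B"
        proof -
          have "(\<lambda>i. \<mu> (B \<inter> F i)) sums \<mu> (\<Union>i. B \<inter> F i)"
            by (rule fsm_sums[OF mu]) (use F B Psets in \<open>auto simp: disjoint_family_on_def\<close>)
          moreover have "(\<Union>i. B \<inter> F i) = B" using B PU by blast
          ultimately show ?thesis by simp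
        qed
        have lim: "(\<lambda>n. ennreal \<bar>\<Sum>i<n. \<mu> (B \<inter> F i)\<bar>) \<longlonglongrightarrow> ennreal \<bar>\<mu> B\<bar>"
          using s unfolding sums_def by (intro tendsto_ennrealI tendsto_rabs)
        show ?thesis
        proof (rule LIMSEQ_le_const2[OF lim], intro exI allI impI)
          fix n
          have "ennreal \<bar>\<Sum>i<n. \<mu> (B \<inter> F i)\<bar> \<le> ennreal (\<Sum>i<n. \<bar>\<mu> (B \<inter> F i)\<bar>)"
            by (intro ennreal_leI sum_abs)
          also have "\<dots> = (\<Sum>i<n. ennreal \<bar>\<mu> (B \<inter> F i)\<bar>)" by (simp add: sum_ennreal)
          also have "\<dots> \<le> (\<Sum>i. ennreal \<bar>\<mu> (B \<inter> F i)\<bar>)" by (rule sum_le_suminf) (auto intro: summableI)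
          finally show "ennreal \<bar>\<Sum>i<n. \<mu> (B \<inter> F i)\<bar> \<le> (\<Sum>i. ennreal \<bar>\<mu> (B \<inter> F i)\<bar>)" .
        qed
      qed
      have "ennreal (\<Sum>B\<in>P. \<bar>\<mu> B\<bar>) = (\<Sum>B\<in>P. ennreal \<bar>\<mu> B\<bar>)" by (simp add: sum_ennreal)
      also have "\<dots> \<le> (\<Sum>B\<in>P. \<Sum>i. ennreal \<bar>\<mu> (B \<inter> F i)\<bar>)" by (intro sum_mono pt)
      also have "\<dots> = (\<Sum>i. \<Sum>B\<in>P. ennreal \<bar>\<mu> (B \<inter> F i)\<bar>)" by (rule suminf_sum[symmetric]) (auto intro: summableI)
      also have "\<dots> \<le> (\<Sum>i. tv M \<mu> (F i))"
      proof (rule suminf_le)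
        fix i
        have "(\<Sum>B\<in>P. ennreal \<bar>\<mu> (B \<inter> F i)\<bar>) = ennreal (\<Sum>B\<in>P. \<bar>\<mu> (B \<inter> F i)\<bar>)" by (simp add: sum_ennreal)
        also have "\<dots> \<le> tv M \<mu> (\<Union>B\<in>P. B \<inter> F i)"
        proof (rule tv_family[where \<mu>=\<mu> and I=P and M=M, OF e Pfin])
          show "(\<lambda>B. B \<inter> F i) ` P \<subseteq> sets M" using Psets F by auto
          show "disjoint_family_on (\<lambda>B. B \<inter> F i) P" using Pdisj
            unfolding disjoint_family_on_def disjoint_def pairwise_def disjnt_def by auto
        qed
        also have "(\<Union>B\<in>P. B \<inter> F i) = F i" using PU by blast
        finally show "(\<Sum>B\<in>P. ennreal \<bar>\<mu> (B \<inter> F i)\<bar>) \<le> tv M \<mu> (F i)" .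
      qed (auto intro: summableI)
      finally show "ennreal (\<Sum>B\<in>P. \<bar>\<mu> B\<bar>) \<le> (\<Sum>i. tv M \<mu> (F i))" .
    qed
  qed
qed


lemma tvm_space: "space (tv_measure M \<mu>) = space M"
  unfolding tv_measure_eq by (simp add: space_measure_of_conv)

lemma tvm_sets: "sets (tv_measure M \<mu>) = sets M"
  unfolding tv_measure_eq by (simp add: sets_measure_of_conv sets.space_closed sets.sigma_sets_eq)

lemma emeasure_tvm:
  assumes "\<mu> \<in> fsm M" "A \<in> sets M"
  shows "emeasure (tv_measure M \<mu>) A = tv M \<mu> A"
  unfolding tv_measure_eq
proof (rule emeasure_measure_of_sigma)
  show "sigma_algebra (space M) (sets M)" by (rule sets.sigma_algebra_axioms)
  show "positive (sets M) (tv M \<mu>)" unfolding positive_def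
    using tv_empty[where \<mu>=\<mu> and M=M, OF fsm_empty[OF assms(1)]] by simp
  show "countably_additive (sets M) (tv M \<mu>)" by (rule tv_countably_additive[OF assms(1)])
qed fact

lemma tvnorm_eq: "\<mu> \<in> fsm M \<Longrightarrow> tvnorm M \<mu> = enn2real (tv M \<mu> (space M))"
  unfolding tvnorm_def wnorm_def wnorm_ext_def
  by (simp add: tvm_space emeasure_tvm)

lemma MW_tv_fin:
  assumes "\<mu> \<in> M_W M V" "\<forall>x\<in>space M. 1 \<le> V x"
  shows "tv M \<mu> (space M) < \<infinity>"
proof -
  have mu: "\<mu> \<in> fsm M" using assms by (simp add: M_W_def)
  have "tv M \<mu> (space M) = (\<integral>\<^sup>+ x. ennreal 1 \<partial>tv_measure M \<mu>)"
    by (simp add: tvm_space emeasure_tvm[OF mu])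
  also have "\<dots> \<le> wnorm_ext M V \<mu>" unfolding wnorm_ext_def
    by (rule nn_integral_mono) (use assms(2) in \<open>auto simp: tvm_space\<close>)
  also have "\<dots> < \<infinity>" using assms by (simp add: M_W_def)
  finally show ?thesis .
qed

lemma tv_real_sums:
  assumes mu: "\<mu> \<in> fsm M" and fin: "tv M \<mu> (space M) < \<infinity>"
    and F: "range F \<subseteq> sets M" "disjoint_family F"
  shows "(\<lambda>i. enn2real (tv M \<mu> (F i))) sums enn2real (tv M \<mu> (\<Union>i. F i))"
proof -
  have e: "\<mu> {} = 0" by (rule fsm_empty[OF mu])
  have U: "(\<Union>i. F i) \<in> sets M" using F by auto
  have finA: "tv M \<mu> A < \<infinity>" if "A \<in> sets M" for A
    using tv_mono[where \<mu>=\<mu> and M=M, OF e that sets.top sets.sets_into_space[OF that]] fin by (meson le_less_trans)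
  have "(\<lambda>i. tv M \<mu> (F i)) sums (\<Sum>i. tv M \<mu> (F i))" by (rule summable_sums) (rule summableI)
  also have "(\<Sum>i. tv M \<mu> (F i)) = tv M \<mu> (\<Union>i. F i)"
    using tv_countably_additive[OF mu] F U unfolding countably_additive_def by blast
  finally have s: "(\<lambda>i. tv M \<mu> (F i)) sums tv M \<mu> (\<Union>i. F i)" .
  have "(\<lambda>i. ennreal (enn2real (tv M \<mu> (F i)))) sums ennreal (enn2real (tv M \<mu> (\<Union>i. F i)))"
    using s finA[OF U] finA F by (simp add: ennreal_enn2real subset_eq)
  thus ?thesis by (subst (asm) sums_ennreal) auto
qed

definition jpos :: "'a measure \<Rightarrow> ('a set \<Rightarrow> real) \<Rightarrow> 'a set \<Rightarrow> real" where
  "jpos M \<mu> A = (if A \<in> sets M then (enn2real (tv M \<mu> A) + \<mu> A) / 2 else 0)"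
definition jneg :: "'a measure \<Rightarrow> ('a set \<Rightarrow> real) \<Rightarrow> 'a set \<Rightarrow> real" where
  "jneg M \<mu> A = (if A \<in> sets M then (enn2real (tv M \<mu> A) - \<mu> A) / 2 else 0)"

lemma tv_abs_real:
  assumes mu: "\<mu> \<in> fsm M" and fin: "tv M \<mu> (space M) < \<infinity>" and A: "A \<in> sets M"
  shows "\<bar>\<mu> A\<bar> \<le> enn2real (tv M \<mu> A)"
proof -
  have e: "\<mu> {} = 0" by (rule fsm_empty[OF mu])
  have f: "tv M \<mu> A < \<infinity>"
    using tv_mono[where \<mu>=\<mu> and M=M, OF e A sets.top sets.sets_into_space[OF A]] fin by (meson le_less_trans)
  have "ennreal \<bar>\<mu> A\<bar> \<le> tv M \<mu> A" by (rule tv_abs[OF A])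
  hence "enn2real (ennreal \<bar>\<mu> A\<bar>) \<le> enn2real (tv M \<mu> A)" using f by (intro enn2real_mono) auto
  thus ?thesis by simp
qed

lemma jordan:
  assumes mu: "\<mu> \<in> fsm M" and fin: "tv M \<mu> (space M) < \<infinity>"
  shows "jpos M \<mu> \<in> fsm M" "jneg M \<mu> \<in> fsm M"
    "\<forall>A\<in>sets M. 0 \<le> jpos M \<mu> A" "\<forall>A\<in>sets M. 0 \<le> jneg M \<mu> A"
    "\<mu> = (\<lambda>A. 1 * jpos M \<mu> A + (-1) * jneg M \<mu> A)"
    "jpos M \<mu> (space M) + jneg M \<mu> (space M) = enn2real (tv M \<mu> (space M))"
proof -
  have sums: "(\<lambda>i. f (F i)) sums f (\<Union>i. F i)"
    if f: "f = jpos M \<mu> \<or> f = jneg M \<mu>" and F: "range F \<subseteq> sets M" "disjoint_family F" for f F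
  proof -
    have U: "(\<Union>i. F i) \<in> sets M" using F by auto
    have s1: "(\<lambda>i. enn2real (tv M \<mu> (F i))) sums enn2real (tv M \<mu> (\<Union>i. F i))"
      by (rule tv_real_sums[OF mu fin F])
    have s2: "(\<lambda>i. \<mu> (F i)) sums \<mu> (\<Union>i. F i)" by (rule fsm_sums[OF mu F])
    have Fi: "F i \<in> sets M" for i using F by auto
    show ?thesis using f
    proof
      assume "f = jpos M \<mu>"
      thus ?thesis using sums_divide[OF sums_add[OF s1 s2], of 2] U Fi by (simp add: jpos_def)
    next
      assume "f = jneg M \<mu>"
      thus ?thesis using sums_divide[OF sums_diff[OF s1 s2], of 2] U Fi by (simp add: jneg_def)
    qed
  qed
  show "jpos M \<mu> \<in> fsm M" unfolding fsm_def
  proof (intro CollectI conjI allI impI)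
    fix A assume "A \<notin> sets M" thus "jpos M \<mu> A = 0" by (simp add: jpos_def)
  next
    fix F :: "nat \<Rightarrow> 'a set" assume "range F \<subseteq> sets M" "disjoint_family F"
    thus "(\<lambda>i. jpos M \<mu> (F i)) sums jpos M \<mu> (\<Union>i. F i)" by (intro sums) auto
  qed
  show "jneg M \<mu> \<in> fsm M" unfolding fsm_def
  proof (intro CollectI conjI allI impI)
    fix A assume "A \<notin> sets M" thus "jneg M \<mu> A = 0" by (simp add: jneg_def)
  next
    fix F :: "nat \<Rightarrow> 'a set" assume "range F \<subseteq> sets M" "disjoint_family F"
    thus "(\<lambda>i. jneg M \<mu> (F i)) sums jneg M \<mu> (\<Union>i. F i)" by (intro sums) auto
  qed
  show "\<forall>A\<in>sets M. 0 \<le> jpos M \<mu> A" "\<forall>A\<in>sets M. 0 \<le> jneg M \<mu> A"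
    using tv_abs_real[OF mu fin] by (force simp: jpos_def jneg_def abs_le_iff)+
  show "\<mu> = (\<lambda>A. 1 * jpos M \<mu> A + (-1) * jneg M \<mu> A)"
  proof
    fix A show "\<mu> A = 1 * jpos M \<mu> A + (-1) * jneg M \<mu> A"
      using fsm_out[OF mu] by (cases "A \<in> sets M") (auto simp: jpos_def jneg_def field_simps)
  qed
  show "jpos M \<mu> (space M) + jneg M \<mu> (space M) = enn2real (tv M \<mu> (space M))"
    by (simp add: jpos_def jneg_def field_simps)
qed

lemma nonneg_measure:
  assumes m: "m \<in> fsm M" and nn: "\<forall>A\<in>sets M. 0 \<le> m A"
  shows "A \<in> sets M \<Longrightarrow> emeasure (measure_of (space M) (sets M) (\<lambda>A. ennreal (m A))) A = ennreal (m A)"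
proof (rule emeasure_measure_of_sigma)
  show "sigma_algebra (space M) (sets M)" by (rule sets.sigma_algebra_axioms)
  show "positive (sets M) (\<lambda>A. ennreal (m A))" unfolding positive_def
    using fsm_empty[OF m] by simp
  show "countably_additive (sets M) (\<lambda>A. ennreal (m A))" unfolding countably_additive_def
  proof (intro allI impI)
    fix F :: "nat \<Rightarrow> 'a set" assume F: "range F \<subseteq> sets M" "disjoint_family F" "\<Union>(range F) \<in> sets M"
    have "(\<lambda>i. m (F i)) sums m (\<Union>i. F i)" by (rule fsm_sums[OF m F(1,2)])
    hence "(\<lambda>i. ennreal (m (F i))) sums ennreal (m (\<Union>i. F i))"
      using nn F by (subst sums_ennreal) auto
    thus "(\<Sum>i. ennreal (m (F i))) = ennreal (m (\<Union>(range F)))" by (simp add: sums_iff)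
  qed
qed

lemma nonneg_mono:
  assumes m: "m \<in> fsm M" and nn: "\<forall>A\<in>sets M. 0 \<le> m A" and A: "A \<in> sets M"
  shows "m A \<le> m (space M)"
proof -
  let ?mm = "measure_of (space M) (sets M) (\<lambda>A. ennreal (m A))"
  have "sets ?mm = sets M" by (simp add: sets_measure_of_conv sets.space_closed sets.sigma_sets_eq)
  hence "emeasure ?mm A \<le> emeasure ?mm (space M)"
    using A by (intro emeasure_mono) (auto simp: sets.sets_into_space)
  hence "ennreal (m A) \<le> ennreal (m (space M))" using nonneg_measure[OF m nn] A by simp
  thus ?thesis using nn by (simp add: ennreal_le_iff)
qed

lemma nonneg_tv:
  assumes m: "m \<in> fsm M" and nn: "\<forall>A\<in>sets M. 0 \<le> m A"
  shows "tv M m (space M) = ennreal (m (space M))"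
proof (rule antisym)
  let ?mm = "measure_of (space M) (sets M) (\<lambda>A. ennreal (m A))"
  have smm: "sets ?mm = sets M" by (simp add: sets_measure_of_conv sets.space_closed sets.sigma_sets_eq)
  show "tv M m (space M) \<le> ennreal (m (space M))" unfolding tv_def
  proof (rule SUP_least)
    fix P assume P: "P \<in> parts M (space M)"
    hence Pf: "finite P" and Ps: "P \<subseteq> sets M" and Pd: "disjoint P" and PU: "\<Union>P = space M"
      by (auto simp: parts_def)
    have "(\<Sum>B\<in>P. \<bar>m B\<bar>) = (\<Sum>B\<in>P. m B)"
      using Ps nn by (intro sum.cong) auto
    also have "ennreal (\<Sum>B\<in>P. m B) = (\<Sum>B\<in>P. ennreal (m B))"
      using Ps nn by (intro sum_ennreal[symmetric]) auto
    also have "\<dots> = (\<Sum>B\<in>P. emeasure ?mm B)"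
      using Ps nonneg_measure[OF m nn] by (intro sum.cong) auto
    also have "\<dots> = emeasure ?mm (\<Union>B\<in>P. B)"
      by (rule sum_emeasure) (use Ps Pd Pf smm in \<open>auto simp: disjoint_family_on_def disjoint_def pairwise_def disjnt_def\<close>)
    also have "\<dots> = ennreal (m (space M))" using PU nonneg_measure[OF m nn] by simp
    finally show "ennreal (\<Sum>B\<in>P. \<bar>m B\<bar>) \<le> ennreal (m (space M))" by simp
  qed
  show "ennreal (m (space M)) \<le> tv M m (space M)"
    using tv_abs[where M=M and \<mu>=m, OF sets.top] nn by simp
qed

lemma S_nonneg:
  assumes S: "stochastic_op M S" and m: "m \<in> fsm M" and nn: "\<forall>A\<in>sets M. 0 \<le> m A"
  shows "S m \<in> fsm M \<and> (\<forall>A\<in>sets M. 0 \<le> S m A) \<and> S m (space M) = m (space M)"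
proof (cases "m (space M) = 0")
  case True
  have z: "m = (\<lambda>A. 0)"
  proof
    fix A show "m A = 0"
    proof (cases "A \<in> sets M")
      case True thus ?thesis using nonneg_mono[OF m nn True] nn \<open>m (space M) = 0\<close> by force
    qed (use fsm_out[OF m] in auto)
  qed
  have "S m = S (\<lambda>A. 0 * m A + 0 * m A)" by (simp add: z)
  also have "\<dots> = (\<lambda>A. 0 * S m A + 0 * S m A)" using S m unfolding stochastic_op_def by blast
  finally have "S m = (\<lambda>A. 0)" by simp
  thus ?thesis using S m True unfolding stochastic_op_def by auto
next
  case False
  define c where "c = m (space M)"
  have c: "c > 0" using False nn by (auto simp: c_def less_le)
  define p where "p = (\<lambda>A. m A / c)"
  have p: "p \<in> prob_fsm M"
    unfolding prob_fsm_def fsm_def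
    using fsm_out[OF m] fsm_sums[OF m] nn c
    by (auto simp: p_def c_def intro!: sums_divide)
  hence pf: "p \<in> fsm M" by (simp add: prob_fsm_def)
  have "m = (\<lambda>A. c * p A + 0 * p A)" using c by (auto simp: p_def)
  hence "S m = S (\<lambda>A. c * p A + 0 * p A)" by simp
  also have "\<dots> = (\<lambda>A. c * S p A + 0 * S p A)" using S pf unfolding stochastic_op_def by blast
  finally have Sm: "S m = (\<lambda>A. c * S p A)" by simp
  have Sp: "S p \<in> prob_fsm M" using S p unfolding stochastic_op_def by blast
  have "S m \<in> fsm M" using S m unfolding stochastic_op_def by blast
  thus ?thesis using Sp c by (auto simp: Sm prob_fsm_def c_def)
qed

lemma tv_diff_le:
  "tv M (\<lambda>A. f A - g A) X \<le> tv M f X + tv M g X"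
  unfolding tv_def[of M "\<lambda>A. f A - g A"]
proof (rule SUP_least)
  fix P assume P: "P \<in> parts M X"
  have "ennreal (\<Sum>B\<in>P. \<bar>f B - g B\<bar>) \<le> ennreal ((\<Sum>B\<in>P. \<bar>f B\<bar>) + (\<Sum>B\<in>P. \<bar>g B\<bar>))"
    by (intro ennreal_leI) (simp add: sum.distrib[symmetric] sum_mono abs_triangle_ineq4)
  also have "\<dots> = ennreal (\<Sum>B\<in>P. \<bar>f B\<bar>) + ennreal (\<Sum>B\<in>P. \<bar>g B\<bar>)"
    by (simp add: ennreal_plus sum_nonneg)
  also have "\<dots> \<le> tv M f X + tv M g X" by (intro add_mono tv_upper P)
  finally show "ennreal (\<Sum>B\<in>P. \<bar>f B - g B\<bar>) \<le> tv M f X + tv M g X" .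
qed

lemma S_contract:
  assumes S: "stochastic_op M S" and mu: "\<mu> \<in> fsm M" and fin: "tv M \<mu> (space M) < \<infinity>"
  shows "tv M (S \<mu>) (space M) \<le> tv M \<mu> (space M)" "S \<mu> (space M) = \<mu> (space M)"
proof -
  note J = jordan[OF mu fin]
  let ?p = "jpos M \<mu>" and ?n = "jneg M \<mu>"
  have "S \<mu> = S (\<lambda>A. 1 * ?p A + (-1) * ?n A)" by (rule arg_cong[where f=S, OF J(5)])
  also have "\<dots> = (\<lambda>A. 1 * S ?p A + (-1) * S ?n A)" using S J(1,2) unfolding stochastic_op_def by blast
  finally have Smu: "S \<mu> = (\<lambda>A. S ?p A - S ?n A)" by simp
  note P = S_nonneg[OF S J(1) J(3)] and N = S_nonneg[OF S J(2) J(4)]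
  have "tv M (S \<mu>) (space M) \<le> tv M (S ?p) (space M) + tv M (S ?n) (space M)"
    unfolding Smu by (rule tv_diff_le)
  also have "\<dots> = ennreal (?p (space M)) + ennreal (?n (space M))"
    using nonneg_tv[of "S ?p" M] nonneg_tv[of "S ?n" M] P N by simp
  also have "\<dots> = ennreal (?p (space M) + ?n (space M))"
    using J(3,4) by (simp add: ennreal_plus)
  also have "\<dots> = tv M \<mu> (space M)" using J(6) fin by (simp add: ennreal_enn2real)
  finally show "tv M (S \<mu>) (space M) \<le> tv M \<mu> (space M)" .
  have "\<mu> (space M) = ?p (space M) - ?n (space M)" using fun_cong[OF J(5), of "space M"] by simp
  thus "S \<mu> (space M) = \<mu> (space M)" using P N by (simp add: Smu)
qed


lemma phi_bound:
  assumes phi: "admissible_rate \<phi>"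
  shows "\<exists>c>0. \<forall>v\<ge>1. \<phi> v \<le> c * v"
proof -
  have conc: "convex_on {1..} (\<lambda>x. - \<phi> x)" and ge1: "\<forall>v\<ge>1. \<phi> v \<ge> 1"
    and lim: "((\<lambda>v. \<phi> v / v) \<longlongrightarrow> 0) at_top"
    using phi by (auto simp: admissible_rate_def concave_on_def)
  have "eventually (\<lambda>v. \<phi> v / v < 1) at_top" using order_tendstoD(2)[OF lim] by simp
  then obtain R0 where R0: "\<forall>v\<ge>R0. \<phi> v / v < 1" by (auto simp: eventually_at_top_linorder)
  define R where "R = max R0 1"
  have R1: "R \<ge> 1" by (simp add: R_def)
  have big: "\<phi> v \<le> v" if "v \<ge> R" for v
  proof -
    have "v > 0" using that R1 by simp
    moreover have "v \<ge> R0" using that by (simp add: R_def)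
    hence "\<phi> v / v < 1" using R0 by blast
    ultimately show ?thesis by (simp add: divide_less_eq)
  qed
  have small: "\<phi> v \<le> R * \<phi> R" if v: "1 \<le> v" "v < R" for v
  proof -
    define u where "u = 1 / (R + 1 - v)"
    define w where "w = (R - v) / (R + 1 - v)"
    have pos: "R + 1 - v > 0" using v by simp
    have u0: "u \<ge> 0" "w \<ge> 0" "u + w = 1" using pos v by (auto simp: u_def w_def field_simps)
    have e: "v + (R - v) * (R + 1) = R * (R + 1 - v)" by (simp add: algebra_simps)
    have "u * v + w * (R + 1) = (v + (R - v) * (R + 1)) / (R + 1 - v)"
      unfolding u_def w_def by (simp add: add_divide_distrib)
    also have "\<dots> = R" using pos by (simp only: e) simp
    finally have comb: "u * v + w * (R + 1) = R" .
    have "- \<phi> (u *\<^sub>R v + w *\<^sub>R (R + 1)) \<le> u * (- \<phi> v) + w * (- \<phi> (R + 1))"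
      using conc v R1 u0 unfolding convex_on_def by (auto)
    hence "u * \<phi> v \<le> \<phi> R - w * \<phi> (R + 1)" using comb by simp
    moreover have "\<phi> (R + 1) \<ge> 1" using ge1 R1 by simp
    hence "w * \<phi> (R + 1) \<ge> 0" using u0 by simp
    ultimately have "u * \<phi> v \<le> \<phi> R" by linarith
    hence "\<phi> v \<le> \<phi> R * (R + 1 - v)" using pos by (simp add: u_def field_simps)
    also have "\<dots> \<le> \<phi> R * R"
    proof (intro mult_left_mono)
      show "0 \<le> \<phi> R" using ge1 R1 by (meson order_trans zero_le_one)
    qed (use v in auto)
    finally show ?thesis by (simp add: mult.commute)
  qed
  define c where "c = max 1 (R * \<phi> R)"
  have c1: "c \<ge> 1" by (simp add: c_def)
  have "\<forall>v\<ge>1. \<phi> v \<le> c * v"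
  proof (intro allI impI)
    fix v :: real assume v: "v \<ge> 1"
    show "\<phi> v \<le> c * v"
    proof (cases "v < R")
      case True
      hence "\<phi> v \<le> c" using small v by (smt (verit) c_def)
      also have "c \<le> c * v" using v c1 mult_left_mono[of 1 v c] by simp
      finally show ?thesis .
    next
      case False
      hence "\<phi> v \<le> v" using big by simp
      also have "v \<le> c * v" using v c1 mult_right_mono[of 1 c v] by simp
      finally show ?thesis .
    qed
  qed
  moreover have "c > 0" by (simp add: c_def)
  ultimately show ?thesis by blast
qed


lemma arith1:
  fixes an a0 B1 B2 T1 T2 t0 tn K \<sigma> A \<gamma> \<beta> Nr :: real
  assumes tele: "an + \<sigma> * (B1 + B2) \<le> a0 + K * (T1 + T2)"
    and h1: "K * T1 \<le> (K / A) * B1" and h2: "T2 \<le> Nr * t0" and tn: "tn \<le> \<gamma> * t0"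
    and b: "\<beta> * (K * Nr) = 1 - \<gamma>" "\<beta> > 0" and B2: "B2 \<ge> 0" and K: "K > 0" and A: "A > 0"
  shows "tn + \<beta> * an + \<beta> * (\<sigma> - K / A) * (B1 + B2) \<le> t0 + \<beta> * a0"
proof -
  have 1: "\<beta> * (an + \<sigma> * (B1 + B2)) \<le> \<beta> * (a0 + K * (T1 + T2))"
    using tele b by (intro mult_left_mono) auto
  have 2: "\<beta> * (K * T1) \<le> \<beta> * ((K / A) * B1)" using h1 b by (intro mult_left_mono) auto
  have 3: "\<beta> * (K * T2) \<le> \<beta> * (K * (Nr * t0))" using h2 b K by (intro mult_left_mono) auto
  have 4: "\<beta> * ((K / A) * B2) \<ge> 0" using b B2 K A by simp
  have 5: "\<beta> * (K * (Nr * t0)) = (1 - \<gamma>) * t0"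
  proof -
    have "\<beta> * (K * (Nr * t0)) = (\<beta> * (K * Nr)) * t0" by (simp add: algebra_simps)
    thus ?thesis using b(1) by simp
  qed
  show ?thesis using 1 2 3 4 5 tn by (simp add: algebra_simps add_divide_distrib)
qed

lemma arith2:
  fixes an a0 B T t0 tn K \<sigma> A \<beta> :: real
  assumes tele: "an + \<sigma> * B \<le> a0 + K * T"
    and h1: "K * T \<le> (K / A) * B" and tn: "tn \<le> t0" and b: "\<beta> > 0"
  shows "tn + \<beta> * an + \<beta> * (\<sigma> - K / A) * B \<le> t0 + \<beta> * a0"
proof -
  have 1: "\<beta> * (an + \<sigma> * B) \<le> \<beta> * (a0 + K * T)"
    using tele b by (intro mult_left_mono) auto
  have 2: "\<beta> * (K * T) \<le> \<beta> * ((K / A) * B)" using h1 b by (intro mult_left_mono) auto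
  show ?thesis using 1 2 tn by (simp add: algebra_simps add_divide_distrib)
qed

theorem lemma4p3:
  fixes M :: "'a measure" and V :: "'a \<Rightarrow> real" and \<phi> :: "real \<Rightarrow> real"
    and S :: "('a set \<Rightarrow> real) \<Rightarrow> ('a set \<Rightarrow> real)"
    and K \<sigma> \<gamma> A :: real and N :: nat
  assumes V_meas: "V \<in> borel_measurable M"
    and V_ge1: "\<forall>x\<in>space M. 1 \<le> V x"
    and phi: "admissible_rate \<phi>"
    and S: "stochastic_op_W M V S"
    and K: "K > 0" and sigma: "0 < \<sigma>" "\<sigma> < 1"
    and lyap: "\<forall>\<mu>\<in>M_W M V.
        wnorm M V (S \<mu>) + \<sigma> * wnorm M (\<phi> \<circ> V) \<mu> \<le> wnorm M V \<mu> + K * tvnorm M \<mu>"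
    and N: "N \<ge> 1"
    and gamma: "0 < \<gamma>" "\<gamma> < 1"
    and A: "A > K / \<sigma>"
    and coupling: "\<forall>\<nu>\<in>N_W M (\<phi> \<circ> V). wnorm M (\<phi> \<circ> V) \<nu> \<le> A * tvnorm M \<nu> \<longrightarrow>
        tvnorm M ((S ^^ N) \<nu>) \<le> \<gamma> * tvnorm M \<nu>"
  shows "let \<beta> = (1 - \<gamma>) / (K * real N);
             \<alpha> = \<beta> * (\<sigma> - K / A);
             tn = (\<lambda>\<mu>. tvnorm M \<mu> + \<beta> * wnorm M V \<mu>)
         in \<forall>\<nu>\<in>N_W M V. \<exists>n. N \<le> n \<and> n \<le> 2 * N - 1 \<and>
              tn ((S ^^ n) \<nu>) + \<alpha> * (\<Sum>k<n. wnorm M (\<phi> \<circ> V) ((S ^^ k) \<nu>)) \<le> tn \<nu>"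
proof -
  define \<beta> where "\<beta> = (1 - \<gamma>) / (K * real N)"
  define \<alpha> where "\<alpha> = \<beta> * (\<sigma> - K / A)"
  define tn where "tn = (\<lambda>\<mu>. tvnorm M \<mu> + \<beta> * wnorm M V \<mu>)"
  have Sop: "stochastic_op M S" and SMW: "\<forall>\<mu>\<in>M_W M V. S \<mu> \<in> M_W M V"
    using S by (auto simp: stochastic_op_W_def)
  obtain c where c: "c > 0" "\<forall>v\<ge>1. \<phi> v \<le> c * v" using phi_bound[OF phi] by blast
  have Apos: "A > 0" using A K sigma by (smt (verit) divide_pos_pos)
  have bpos: "\<beta> > 0" using gamma K N by (simp add: \<beta>_def)
  have bKN: "\<beta> * (K * real N) = 1 - \<gamma>" using K N by (simp add: \<beta>_def)
  have main: "\<exists>n. N \<le> n \<and> n \<le> 2 * N - 1 \<and>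
      tn ((S ^^ n) \<nu>) + \<alpha> * (\<Sum>k<n. wnorm M (\<phi> \<circ> V) ((S ^^ k) \<nu>)) \<le> tn \<nu>"
    if nu: "\<nu> \<in> N_W M V" for \<nu>
  proof -
    define t where "t k = tvnorm M ((S^^k) \<nu>)" for k
    define a where "a k = wnorm M V ((S^^k) \<nu>)" for k
    define b where "b k = wnorm M (\<phi> \<circ> V) ((S^^k) \<nu>)" for k
    have inMW: "(S^^k) \<nu> \<in> M_W M V" for k
      by (induction k) (use nu SMW in \<open>auto simp: N_W_def\<close>)
    have fsmk: "(S^^k) \<nu> \<in> fsm M" for k using inMW by (simp add: M_W_def)
    have fink: "tv M ((S^^k) \<nu>) (space M) < \<infinity>" for k by (rule MW_tv_fin[OF inMW V_ge1])
    have mass: "(S^^k) \<nu> (space M) = 0" for k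
    proof (induction k)
      case 0 thus ?case using nu by (simp add: N_W_def)
    next
      case (Suc k) thus ?case using S_contract(2)[OF Sop fsmk fink, of k] by simp
    qed
    have tdec: "t (Suc k) \<le> t k" for k
    proof -
      have "tv M (S ((S^^k) \<nu>)) (space M) \<le> tv M ((S^^k) \<nu>) (space M)"
        by (rule S_contract(1)[OF Sop fsmk fink])
      hence "enn2real (tv M (S ((S^^k) \<nu>)) (space M)) \<le> enn2real (tv M ((S^^k) \<nu>) (space M))"
        using fink by (intro enn2real_mono) auto
      moreover have "S ((S^^k) \<nu>) \<in> fsm M" using fsmk[of "Suc k"] by simp
      ultimately show ?thesis using fsmk[of k] by (simp add: t_def tvnorm_eq)
    qed
    have tle: "t k \<le> t 0" for k
    proof (induction k)
      case (Suc k) thus ?case using tdec[of k] by linarith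
    qed simp
    have tnn: "t k \<ge> 0" for k by (simp add: t_def tvnorm_def wnorm_def)
    have bnn: "b k \<ge> 0" for k by (simp add: b_def wnorm_def)
    have lyk: "a (Suc k) + \<sigma> * b k \<le> a k + K * t k" for k
      using lyap inMW[of k] by (simp add: a_def b_def t_def)
    have tele: "a n + \<sigma> * (\<Sum>k<n. b k) \<le> a 0 + K * (\<Sum>k<n. t k)" for n
    proof (induction n)
      case (Suc n) thus ?case using lyk[of n] by (simp add: algebra_simps)
    qed simp
    have phifin: "(S^^k) \<nu> \<in> N_W M (\<phi> \<circ> V)" for k
    proof -
      have meas: "(\<lambda>x. ennreal (V x)) \<in> borel_measurable M" using V_meas by measurable
      have "wnorm_ext M (\<phi> \<circ> V) ((S^^k) \<nu>) \<le> (\<integral>\<^sup>+x. ennreal c * ennreal (V x) \<partial>tv_measure M ((S^^k) \<nu>))"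
        unfolding wnorm_ext_def
      proof (rule nn_integral_mono)
        fix x assume "x \<in> space (tv_measure M ((S^^k) \<nu>))"
        hence V1: "V x \<ge> 1" using V_ge1 by (simp add: tvm_space)
        hence "\<phi> (V x) \<le> c * V x" using c by simp
        hence "ennreal (\<phi> (V x)) \<le> ennreal (c * V x)" by (rule ennreal_leI)
        thus "ennreal ((\<phi> \<circ> V) x) \<le> ennreal c * ennreal (V x)" using c V1 by (simp add: ennreal_mult)
      qed
      also have "\<dots> = ennreal c * wnorm_ext M V ((S^^k) \<nu>)" unfolding wnorm_ext_def
        by (rule nn_integral_cmult) (simp add: measurable_cong_sets[OF tvm_sets refl] meas)
      also have "\<dots> < \<infinity>" using inMW[of k] by (simp add: M_W_def ennreal_mult_less_top)
      finally show ?thesis using fsmk mass by (simp add: N_W_def M_W_def)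
    qed
    have tnS: "tn ((S^^n) \<nu>) = t n + \<beta> * a n" for n by (simp add: tn_def t_def a_def)
    have tn0: "tn \<nu> = t 0 + \<beta> * a 0" by (simp add: tn_def t_def a_def)
    show ?thesis
    proof (cases "\<exists>j<N. b j \<le> A * t j")
      case True
      define j where "j = (LEAST j. j < N \<and> b j \<le> A * t j)"
      have j: "j < N" "b j \<le> A * t j" using LeastI_ex[OF True] unfolding j_def by auto
      have before: "A * t k < b k" if "k < j" for k
        using not_less_Least[OF that[unfolded j_def]] that j(1) by auto
      define n where "n = j + N"
      have "tvnorm M ((S ^^ N) ((S^^j) \<nu>)) \<le> \<gamma> * tvnorm M ((S^^j) \<nu>)"
        using coupling phifin[of j] j(2) by (simp add: b_def t_def)
      moreover have "(S ^^ N) ((S^^j) \<nu>) = (S^^n) \<nu>" by (simp add: n_def funpow_add add.commute)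
      ultimately have "t n \<le> \<gamma> * t j" by (simp add: t_def)
      also have "\<dots> \<le> \<gamma> * t 0" using tle gamma by (intro mult_left_mono) auto
      finally have tnle: "t n \<le> \<gamma> * t 0" .
      have splitb: "(\<Sum>k<n. b k) = (\<Sum>k<j. b k) + (\<Sum>k\<in>{j..<n}. b k)"
        by (simp add: n_def atLeast0LessThan[symmetric] sum.atLeastLessThan_concat)
      have splitt: "(\<Sum>k<n. t k) = (\<Sum>k<j. t k) + (\<Sum>k\<in>{j..<n}. t k)"
        by (simp add: n_def atLeast0LessThan[symmetric] sum.atLeastLessThan_concat)
      have h1: "K * (\<Sum>k<j. t k) \<le> (K / A) * (\<Sum>k<j. b k)"
        unfolding sum_distrib_left
      proof (rule sum_mono)
        fix k assume "k \<in> {..<j}"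
        hence "A * t k \<le> b k" using before by (simp add: less_imp_le)
        hence "t k \<le> b k / A" using Apos by (simp add: pos_le_divide_eq mult.commute)
        hence "K * t k \<le> K * (b k / A)" using K by (intro mult_left_mono) auto
        thus "K * t k \<le> K / A * b k" by simp
      qed
      have h2: "(\<Sum>k\<in>{j..<n}. t k) \<le> real N * t 0"
        using sum_bounded_above[of "{j..<n}" t "t 0"] tle by (simp add: n_def)
      have B2: "(\<Sum>k\<in>{j..<n}. b k) \<ge> 0" using bnn by (simp add: sum_nonneg)
      have "t n + \<beta> * a n + \<beta> * (\<sigma> - K / A) * ((\<Sum>k<j. b k) + (\<Sum>k\<in>{j..<n}. b k)) \<le> t 0 + \<beta> * a 0"
        by (rule arith1[OF _ h1 h2 tnle bKN bpos B2 K Apos]) (use tele[of n] splitb splitt in simp)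
      hence "tn ((S ^^ n) \<nu>) + \<alpha> * (\<Sum>k<n. wnorm M (\<phi> \<circ> V) ((S ^^ k) \<nu>)) \<le> tn \<nu>"
        unfolding tnS tn0 \<alpha>_def using splitb by (simp add: b_def algebra_simps)
      moreover have "N \<le> n" "n \<le> 2 * N - 1" using j(1) by (auto simp: n_def)
      ultimately show ?thesis by blast
    next
      case False
      have h: "A * t k < b k" if "k < N" for k using False that by auto
      have h1: "K * (\<Sum>k<N. t k) \<le> (K / A) * (\<Sum>k<N. b k)"
        unfolding sum_distrib_left
      proof (rule sum_mono)
        fix k assume "k \<in> {..<N}"
        hence "A * t k \<le> b k" using h by (simp add: less_imp_le)
        hence "t k \<le> b k / A" using Apos by (simp add: pos_le_divide_eq mult.commute)
        hence "K * t k \<le> K * (b k / A)" using K by (intro mult_left_mono) auto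
        thus "K * t k \<le> K / A * b k" by simp
      qed
      have "t N + \<beta> * a N + \<beta> * (\<sigma> - K / A) * (\<Sum>k<N. b k) \<le> t 0 + \<beta> * a 0"
        by (rule arith2[OF tele[of N] h1 tle bpos])
      hence "tn ((S ^^ N) \<nu>) + \<alpha> * (\<Sum>k<N. wnorm M (\<phi> \<circ> V) ((S ^^ k) \<nu>)) \<le> tn \<nu>"
        unfolding tnS tn0 \<alpha>_def by (simp add: b_def algebra_simps)
      moreover have "N \<le> N" "N \<le> 2 * N - 1" using N by auto
      ultimately show ?thesis by blast
    qed
  qed
  show ?thesis unfolding Let_def using main by (simp add: \<alpha>_def \<beta>_def tn_def)
qed

end
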